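(* A finite graph is isomorphic to an induced subgraph of the power graph of some finite group if and only if it is the comparability graph of a partial order. Moreover, the group can be taken to be cyclic of squarefree order.
   Context: The power graph of a group $G$ has vertex set $G$, distinct $x,y$ adjacent iff one is a power of the other. The comparability graph of a partial order $(A,\leqslant)$ has vertex set $A$, with distinct $a,b$ adjacent iff $a\leqslant b$ or $b\leqslant a$. *)

theory Defs
  imports "HOL-Algebra.Algebra" "HOL-Computational_Algebra.Squarefree"
begin

definition finite_simple_graph :: "'a set \<Rightarrow> ('a \<Rightarrow> 'a \<Rightarrow> bool) \<Rightarrow> bool" where
  "finite_simple_graph V E \<longleftrightarrow> finite V \<and>
     (\<forall>x\<in>V. \<forall>y\<in>V. E x y \<longleftrightarrow> E y x) \<and> (\<forall>x\<in>V. \<not> E x x)"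

definition power_graph_adj :: "('g, 'b) monoid_scheme \<Rightarrow> 'g \<Rightarrow> 'g \<Rightarrow> bool" where
  "power_graph_adj G x y \<longleftrightarrow> x \<noteq> y \<and>
     ((\<exists>n::int. x = y [^]\<^bsub>G\<^esub> n) \<or> (\<exists>n::int. y = x [^]\<^bsub>G\<^esub> n))"

definition embeds_in_power_graph ::
    "'a set \<Rightarrow> ('a \<Rightarrow> 'a \<Rightarrow> bool) \<Rightarrow> ('g, 'b) monoid_scheme \<Rightarrow> bool" where
  "embeds_in_power_graph V E G \<longleftrightarrow>
     (\<exists>f. inj_on f V \<and> f ` V \<subseteq> carrier G \<and>
          (\<forall>x\<in>V. \<forall>y\<in>V. E x y \<longleftrightarrow> power_graph_adj G (f x) (f y)))"

definition partial_order_on_set :: "'a set \<Rightarrow> ('a \<Rightarrow> 'a \<Rightarrow> bool) \<Rightarrow> bool" where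
  "partial_order_on_set A R \<longleftrightarrow>
     (\<forall>x\<in>A. R x x) \<and>
     (\<forall>x\<in>A. \<forall>y\<in>A. R x y \<and> R y x \<longrightarrow> x = y) \<and>
     (\<forall>x\<in>A. \<forall>y\<in>A. \<forall>z\<in>A. R x y \<and> R y z \<longrightarrow> R x z)"

definition comparability_adj :: "('a \<Rightarrow> 'a \<Rightarrow> bool) \<Rightarrow> 'a \<Rightarrow> 'a \<Rightarrow> bool" where
  "comparability_adj R x y \<longleftrightarrow> x \<noteq> y \<and> (R x y \<or> R y x)"

definition is_comparability_graph :: "'a set \<Rightarrow> ('a \<Rightarrow> 'a \<Rightarrow> bool) \<Rightarrow> bool" where
  "is_comparability_graph V E \<longleftrightarrow>
     (\<exists>R. partial_order_on_set V R \<and>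
          (\<forall>x\<in>V. \<forall>y\<in>V. E x y \<longleftrightarrow> comparability_adj R x y))"

end

theory Submission
  imports Defs
begin

definition ZN :: "nat \<Rightarrow> nat monoid" where
  "ZN N = \<lparr>carrier = {..<N}, monoid.mult = (\<lambda>x y. (x + y) mod N), one = 0\<rparr>"

lemma ZN_carrier[simp]: "carrier (ZN N) = {..<N}" by (simp add: ZN_def)
lemma ZN_mult[simp]: "x \<otimes>\<^bsub>ZN N\<^esub> y = (x + y) mod N" by (simp add: ZN_def)
lemma ZN_one[simp]: "\<one>\<^bsub>ZN N\<^esub> = 0" by (simp add: ZN_def)

lemma ZN_group: assumes "N > 0" shows "group (ZN N)"
proof (rule groupI)
  fix x assume "x \<in> carrier (ZN N)"
  then have "x < N" by (simp add:)
  show "\<exists>y\<in>carrier (ZN N). y \<otimes>\<^bsub>ZN N\<^esub> x = \<one>\<^bsub>ZN N\<^esub>"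
    using \<open>x < N\<close> assms
    by (intro bexI[of _ "(N - x) mod N"]) (auto simp: mod_add_left_eq)
qed (use assms in \<open>auto simp: mod_add_left_eq mod_add_right_eq add.assoc\<close>)

lemma ZN_pow: assumes "x < N" shows "x [^]\<^bsub>ZN N\<^esub> (n::nat) = (n * x) mod N"
  by (induction n) (simp_all add: mod_add_right_eq add.commute)

lemma int_pow_to_nat:
  fixes G (structure)
  assumes "group G" "x \<in> carrier G" "x [^]\<^bsub>G\<^esub> (M::nat) = \<one>\<^bsub>G\<^esub>" "M > 0"
  shows "\<exists>k::nat. x [^]\<^bsub>G\<^esub> (n::int) = x [^]\<^bsub>G\<^esub> k"
proof -
  interpret group G by fact
  have e: "n = int M * (n div int M) + n mod int M" by simp
  have "x [^] n = x [^] (int M * (n div int M) + n mod int M)" using e by simp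
  also have "\<dots> = x [^] (int M * (n div int M)) \<otimes> x [^] (n mod int M)"
    by (rule int_pow_mult[OF assms(2)])
  also have "x [^] (int M * (n div int M)) = \<one>"
    by (simp add: int_pow_pow[symmetric] assms int_pow_int)
  also have "x [^] (n mod int M) = x [^] (nat (n mod int M))"
    using assms(4) by (metis int_pow_int pos_mod_sign of_nat_0_less_iff nat_0_le)
  finally have "x [^] n = x [^] (nat (n mod int M))" using assms by simp
  then show ?thesis by blast
qed

lemma ZN_int_pow: assumes "N > 0" "y < N"
  shows "(\<exists>n::int. x = y [^]\<^bsub>ZN N\<^esub> n) \<longleftrightarrow> (\<exists>k::nat. x = (k * y) mod N)"
proof
  assume "\<exists>n::int. x = y [^]\<^bsub>ZN N\<^esub> n"
  then obtain n::int where n: "x = y [^]\<^bsub>ZN N\<^esub> n" by blast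
  have "y [^]\<^bsub>ZN N\<^esub> N = \<one>\<^bsub>ZN N\<^esub>" using assms by (simp add: ZN_pow)
  then obtain k::nat where "y [^]\<^bsub>ZN N\<^esub> n = y [^]\<^bsub>ZN N\<^esub> k"
    using int_pow_to_nat[OF ZN_group[OF assms(1)], of y N n] assms by (auto simp:)
  then show "\<exists>k::nat. x = (k * y) mod N" using n ZN_pow[OF assms(2)] by auto
next
  assume "\<exists>k::nat. x = (k * y) mod N"
  then obtain k where "x = (k * y) mod N" by blast
  then have "x = y [^]\<^bsub>ZN N\<^esub> (int k)" using ZN_pow[OF assms(2)] by (simp add: int_pow_int)
  then show "\<exists>n::int. x = y [^]\<^bsub>ZN N\<^esub> n" by blast
qed

lemma ZN_cyclic: assumes "N > 0" shows "cyclic_group (ZN N)"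
proof -
  interpret group "ZN N" using ZN_group[OF assms] .
  have "carrier (ZN N) = range (\<lambda>n::int. (1 mod N) [^]\<^bsub>ZN N\<^esub> n)"
  proof
    show "range (\<lambda>n::int. (1 mod N) [^]\<^bsub>ZN N\<^esub> n) \<subseteq> carrier (ZN N)"
    proof (rule image_subsetI)
      fix n :: int
      have c: "1 mod N \<in> carrier (ZN N)" using assms by simp
      show "(1 mod N) [^]\<^bsub>ZN N\<^esub> n \<in> carrier (ZN N)" by (rule int_pow_closed[OF c])
    qed
  next
    show "carrier (ZN N) \<subseteq> range (\<lambda>n::int. (1 mod N) [^]\<^bsub>ZN N\<^esub> n)"
    proof
      fix x assume "x \<in> carrier (ZN N)"
      then have "x < N" by (simp add:)
      then have "x = (1 mod N) [^]\<^bsub>ZN N\<^esub> (int x)"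
        using assms by (cases "N = 1") (simp_all add: int_pow_int ZN_pow)
      then show "x \<in> range (\<lambda>n::int. (1 mod N) [^]\<^bsub>ZN N\<^esub> n)" by blast
    qed
  qed
  moreover have "1 mod N \<in> carrier (ZN N)" using assms by (simp add:)
  ultimately have "\<exists>x \<in> carrier (ZN N). carrier (ZN N) = range (\<lambda>n::int. x [^]\<^bsub>ZN N\<^esub> n)" by blast
  then show ?thesis by (simp only: cyclic_group)
qed

lemma ZN_order: "order (ZN N) = N" by (simp add: order_def)

lemma key2:
  fixes N d e :: nat
  assumes "N > 0" "d dvd N" "e dvd N" "d > 1"
  shows "(\<exists>k. N div d = k * (N div e) mod N) \<longleftrightarrow> d dvd e"
proof
  assume "d dvd e"
  then obtain c where c: "e = d * c" by blast
  have "N = e * (N div e)" using assms by simp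
  then have "N = d * (c * (N div e))" using c by (simp add: mult.assoc)
  then have "N div d = c * (N div e)" using assms by (metis nonzero_mult_div_cancel_left not_one_less_zero gr_implies_not0)
  moreover have "N div d < N" using assms by (simp add: div_less_dividend)
  ultimately show "\<exists>k. N div d = k * (N div e) mod N" by (intro exI[of _ c]) simp
next
  assume "\<exists>k. N div d = k * (N div e) mod N"
  then obtain k where k: "N div d = k * (N div e) mod N" by blast
  define A where "A = N div d"
  define B where "B = N div e"
  have NA: "N = d * A" using assms A_def by simp
  have NB: "N = e * B" using assms B_def by simp
  have "k * B = N * (k * B div N) + A" using k A_def B_def by simp
  then have "e * (k * B) = e * (N * (k * B div N) + A)" by simp
  then have "e * (k * B) = e * N * (k * B div N) + e * A" by (simp add: algebra_simps)
  moreover have "e * (k * B) = k * N" using NB by (simp add: algebra_simps)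
  ultimately have "k * N = e * N * (k * B div N) + e * A" by simp
  then have "N dvd e * A"
    by (metis dvd_add_right_iff dvd_triv_right mult.commute mult.left_commute dvd_mult2)
  then have "d * A dvd e * A" using NA by simp
  moreover have "A > 0" using NA assms by (metis gr0I mult_0_right)
  ultimately show "d dvd e" by simp
qed

lemma dir1:
  fixes G :: "('g, 'b) monoid_scheme" (structure) and V :: "'a set"
  assumes grp: "group G" and fsg: "finite_simple_graph V E" and emb: "embeds_in_power_graph V E G"
  shows "is_comparability_graph V E"
proof -
  interpret group G by (rule grp)
  obtain f where inj: "inj_on f V" and fV: "f ` V \<subseteq> carrier G"
    and adj: "\<forall>x\<in>V. \<forall>y\<in>V. E x y \<longleftrightarrow> power_graph_adj G (f x) (f y)"
    using emb unfolding embeds_in_power_graph_def by blast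
  have finV: "finite V" and irr: "\<forall>x\<in>V. \<not> E x x" using fsg unfolding finite_simple_graph_def by auto
  obtain g :: "'a \<Rightarrow> nat" and n where "g ` V = {i. i < n}" and ginj: "inj_on g V"
    using finite_imp_inj_to_nat_seg[OF finV] by blast
  define P where "P a b \<longleftrightarrow> (\<exists>n::int. a = b [^] n)" for a b
  have Prefl: "P a a" if "a \<in> carrier G" for a
    unfolding P_def using that by (intro exI[of _ 1]) simp
  have Ptrans: "P a c" if h1: "P a b" and h2: "P b c" and h3: "c \<in> carrier G" for a b c
  proof -
    obtain m :: int where m: "a = b [^] m" using h1 P_def by blast
    obtain l :: int where l: "b = c [^] l" using h2 P_def by blast
    have "a = c [^] (l * m)" using m l int_pow_pow[OF h3] by simp
    then show ?thesis unfolding P_def by blast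
  qed
  define R where "R x y \<longleftrightarrow> x = y \<or> (P (f x) (f y) \<and> (\<not> P (f y) (f x) \<or> g x < g y))" for x y
  have fc: "f x \<in> carrier G" if "x \<in> V" for x using fV that by blast
  have po: "partial_order_on_set V R"
    unfolding partial_order_on_set_def
  proof (intro conjI ballI impI)
    fix x assume "x \<in> V" then show "R x x" by (simp add: R_def)
  next
    fix x y assume "x \<in> V" "y \<in> V" "R x y \<and> R y x"
    then show "x = y" unfolding R_def by auto
  next
    fix x y z assume V: "x \<in> V" "y \<in> V" "z \<in> V" and r: "R x y \<and> R y z"
    show "R x z"
    proof (cases "x = y \<or> y = z \<or> x = z")
      case True then show ?thesis using r by (auto simp: R_def)
    next
      case False
      then have pxy: "P (f x) (f y)" and pyz: "P (f y) (f z)"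
        and oxy: "\<not> P (f y) (f x) \<or> g x < g y" and oyz: "\<not> P (f z) (f y) \<or> g y < g z"
        using r by (auto simp: R_def)
      have pxz: "P (f x) (f z)" using Ptrans[OF pxy pyz fc[OF V(3)]] .
      show ?thesis
      proof (cases "P (f z) (f x)")
        case False then show ?thesis using pxz by (simp add: R_def)
      next
        case True
        have "P (f y) (f x)" using Ptrans[OF pyz True fc[OF V(1)]] .
        moreover have "P (f z) (f y)" using Ptrans[OF True pxy fc[OF V(2)]] .
        ultimately have "g x < g y" "g y < g z" using oxy oyz by auto
        then show ?thesis using pxz by (simp add: R_def)
      qed
    qed
  qed
  have "E x y \<longleftrightarrow> comparability_adj R x y" if V: "x \<in> V" "y \<in> V" for x y
  proof (cases "x = y")
    case True then show ?thesis using irr V by (simp add: comparability_adj_def)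
  next
    case False
    then have fne: "f x \<noteq> f y" using inj V by (meson inj_on_def)
    have gne: "g x \<noteq> g y" using ginj V False by (meson inj_on_def)
    have "E x y \<longleftrightarrow> P (f x) (f y) \<or> P (f y) (f x)"
      using adj V fne by (simp add: power_graph_adj_def P_def)
    also have "\<dots> \<longleftrightarrow> R x y \<or> R y x" using gne False by (auto simp: R_def)
    finally show ?thesis using False by (simp add: comparability_adj_def)
  qed
  then show ?thesis unfolding is_comparability_graph_def using po by blast
qed

lemma dir2:
  fixes V :: "'a set"
  assumes finV: "finite V" and cg: "is_comparability_graph V E"
  shows "\<exists>G :: nat monoid. group G \<and> finite (carrier G) \<and> cyclic_group G \<and>
              squarefree (order G) \<and> embeds_in_power_graph V E G"
proof -
  obtain R where po: "partial_order_on_set V R"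
    and ER: "\<forall>x\<in>V. \<forall>y\<in>V. E x y \<longleftrightarrow> comparability_adj R x y"
    using cg unfolding is_comparability_graph_def by blast
  have refl: "R x x" if "x \<in> V" for x using po that unfolding partial_order_on_set_def by blast
  have antis: "x = y" if "x \<in> V" "y \<in> V" "R x y" "R y x" for x y
    using po that unfolding partial_order_on_set_def by blast
  have trans: "R x z" if "x \<in> V" "y \<in> V" "z \<in> V" "R x y" "R y z" for x y z
    using po that unfolding partial_order_on_set_def by blast
  obtain h :: "nat \<Rightarrow> nat" where hinj: "inj h" and hpr: "range h \<subseteq> {p. Factorial_Ring.prime p}"
    using infinite_iff_countable_subset[THEN iffD1, OF primes_infinite] by blast
  obtain g :: "'a \<Rightarrow> nat" and m where "g ` V = {i. i < m}" and ginj: "inj_on g V"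
    using finite_imp_inj_to_nat_seg[OF finV] by blast
  define p where "p = h \<circ> g"
  have pinj: "inj_on p V" unfolding p_def using hinj ginj by (simp add: comp_inj_on inj_on_subset)
  have pprime: "Factorial_Ring.prime (p v)" for v using hpr unfolding p_def by auto
  have ppos: "p v > 0" for v using pprime[of v] prime_gt_0_nat by blast
  define D where "D v = {u \<in> V. R u v}" for v
  define d where "d v = prod p (D v)" for v
  define N where "N = prod p V"
  have DV: "D v \<subseteq> V" for v unfolding D_def by blast
  have finD: "finite (D v)" for v using DV finV finite_subset by blast
  have Npos: "N > 0" unfolding N_def using ppos by (simp add: prod_pos)
  have ddvd: "d v dvd N" for v unfolding d_def N_def using DV finV by (intro prod_dvd_prod_subset) auto
  have pdvd: "p v dvd d v" if "v \<in> V" for v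
    unfolding d_def using that refl finD by (intro dvd_prodI) (auto simp: D_def)
  have dgt1: "d v > 1" if "v \<in> V" for v
  proof -
    have "d v > 0" unfolding d_def using ppos by (simp add: prod_pos)
    then have "p v \<le> d v" using pdvd[OF that] by (simp add: dvd_imp_le)
    moreover have "p v > 1" using pprime[of v] prime_gt_1_nat by blast
    ultimately show ?thesis by linarith
  qed
  have dd_iff: "d v dvd d w \<longleftrightarrow> R v w" if v: "v \<in> V" and w: "w \<in> V" for v w
  proof
    assume "R v w"
    then have "D v \<subseteq> D w" unfolding D_def using trans v w by blast
    then show "d v dvd d w" unfolding d_def using finD by (intro prod_dvd_prod_subset) auto
  next
    assume dv: "d v dvd d w"
    have "p v dvd d w" using dvd_trans[OF pdvd[OF v] dv] .
    then obtain u where u: "u \<in> D w" "p v dvd p u"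
      unfolding d_def using prime_dvd_prod_iff[OF finD pprime] by blast
    have "p v = p u" using primes_dvd_imp_eq[OF pprime pprime u(2)] by simp
    then have "v = u" using pinj v u(1) DV by (meson inj_on_def subsetD)
    then show "R v w" using u(1) unfolding D_def by blast
  qed
  define a where "a v = N div d v" for v
  have alt: "a v < N" if "v \<in> V" for v
    unfolding a_def using Npos dgt1[OF that] by (simp add: div_less_dividend)
  have pw: "(\<exists>n::int. a v = a w [^]\<^bsub>ZN N\<^esub> n) \<longleftrightarrow> R v w" if v: "v \<in> V" and w: "w \<in> V" for v w
  proof -
    have "(\<exists>n::int. a v = a w [^]\<^bsub>ZN N\<^esub> n) \<longleftrightarrow> (\<exists>k::nat. a v = (k * a w) mod N)"
      by (rule ZN_int_pow[OF Npos alt[OF w]])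
    also have "\<dots> \<longleftrightarrow> d v dvd d w"
      unfolding a_def by (rule key2[OF Npos ddvd ddvd dgt1[OF v]])
    also have "\<dots> \<longleftrightarrow> R v w" by (rule dd_iff[OF v w])
    finally show ?thesis .
  qed
  have aeq: "a v = a w \<longleftrightarrow> v = w" if v: "v \<in> V" and w: "w \<in> V" for v w
  proof
    assume eq: "a v = a w"
    have "\<exists>n::int. a v = a w [^]\<^bsub>ZN N\<^esub> n"
      using eq alt[OF w] by (intro exI[of _ 1]) (simp add: int_pow_int[of _ _ 1, simplified] ZN_pow)
    moreover have "\<exists>n::int. a w = a v [^]\<^bsub>ZN N\<^esub> n"
      using eq alt[OF v] by (intro exI[of _ 1]) (simp add: int_pow_int[of _ _ 1, simplified] ZN_pow)
    ultimately show "v = w" using antis[OF v w] pw[OF v w] pw[OF w v] by blast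
  qed simp
  have emb: "embeds_in_power_graph V E (ZN N)"
    unfolding embeds_in_power_graph_def
  proof (intro exI[of _ a] conjI ballI)
    show "inj_on a V" using aeq by (meson inj_onI)
    show "a ` V \<subseteq> carrier (ZN N)" using alt by auto
    fix x y assume x: "x \<in> V" and y: "y \<in> V"
    show "E x y \<longleftrightarrow> power_graph_adj (ZN N) (a x) (a y)"
      using ER x y pw[OF x y] pw[OF y x] aeq[OF x y]
      by (simp add: comparability_adj_def power_graph_adj_def)
  qed
  have sq: "squarefree N" unfolding N_def
  proof (rule squarefree_prod_coprime)
    fix u v assume "u \<in> V" "v \<in> V" "u \<noteq> v"
    then have "p u \<noteq> p v" using pinj by (meson inj_on_def)
    then show "coprime (p u) (p v)" using primes_coprime[OF pprime pprime] by blast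
  next
    fix u show "squarefree (p u)" using squarefree_prime[OF pprime] .
  qed
  show ?thesis
    using ZN_group[OF Npos] ZN_cyclic[OF Npos] ZN_order[of N] sq emb
    by (intro exI[of _ "ZN N"]) simp
qed

theorem mainTheorem9:
  fixes V :: "'a set" and E :: "'a \<Rightarrow> 'a \<Rightarrow> bool"
  assumes "finite_simple_graph V E"
  shows "(\<forall>G :: 'g monoid. group G \<and> finite (carrier G) \<and> embeds_in_power_graph V E G
            \<longrightarrow> is_comparability_graph V E)
       \<and> (is_comparability_graph V E \<longrightarrow>
          (\<exists>G :: nat monoid. group G \<and> finite (carrier G) \<and> cyclic_group G \<and>
              squarefree (order G) \<and> embeds_in_power_graph V E G))"
proof (intro conjI allI impI)
  fix G :: "'g monoid"
  assume "group G \<and> finite (carrier G) \<and> embeds_in_power_graph V E G"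
  then show "is_comparability_graph V E" using dir1[of G V E] assms by blast
next
  assume "is_comparability_graph V E"
  moreover have "finite V" using assms unfolding finite_simple_graph_def by blast
  ultimately show "\<exists>G :: nat monoid. group G \<and> finite (carrier G) \<and> cyclic_group G \<and>
              squarefree (order G) \<and> embeds_in_power_graph V E G"
    using dir2 by blast
qed

end
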